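(* There exists a finite-state deep sequence $S\in\{0,1\}^\infty$.
   Context: A finite-state transducer (FST) is a 4-tuple $T=(Q,\delta,\nu,q_0)$ with $Q$ a nonempty finite set of states, $\delta:Q\times\{0,1\}\to Q$, $\nu:Q\times\{0,1\}\to\{0,1\}^*$, $q_0\in Q$, every state reachable from $q_0$; $\widehat\delta(\lambda)=q_0$, $\widehat\delta(xa)=\delta(\widehat\delta(x),a)$, $T(\lambda)=\lambda$, $T(xa)=T(x)\nu(\widehat\delta(x),a)$. Fix a standard binary representation $\sigma_T$ of each FST, $|T|=|\sigma_T|$, $\mathrm{FST}^{\leq k}=\{T:|T|\le k\}$, and $\mathrm{FS}^k(x)=\min\{|p|:\exists T\in\mathrm{FST}^{\le k},\ T(p)=x\}$. For a sequence $S$, $S\upharpoonright n$ is its first $n$ bits. $S$ is finite-state deep if $(\exists\alpha>0)(\forall k\in\mathbb{N})(\exists k'\in\mathbb{N})(\exists^\infty n\in\mathbb{N})\ \mathrm{FS}^k(S\upharpoonright n)-\mathrm{FS}^{k'}(S\upharpoonright n)\ge\alpha n$. *)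

theory Defs
  imports Complex_Main "HOL-Library.Extended_Real"
begin

text \<open>Binary alphabet {0,1} is rendered as bool (False = 0, True = 1); binary strings are bool lists.
A finite-state transducer T = (Q, delta, nu, q0) is rendered as a tuple (n, delta, nu, q0) with
state set Q = {0..<n}.  Only the values of delta and nu on Q matter.\<close>

type_synonym fst = "nat \<times> (nat \<Rightarrow> bool \<Rightarrow> nat) \<times> (nat \<Rightarrow> bool \<Rightarrow> bool list) \<times> nat"

definition fst_states :: "fst \<Rightarrow> nat" where "fst_states T = fst T"
definition fst_delta :: "fst \<Rightarrow> nat \<Rightarrow> bool \<Rightarrow> nat" where "fst_delta T = fst (snd T)"
definition fst_nu :: "fst \<Rightarrow> nat \<Rightarrow> bool \<Rightarrow> bool list" where "fst_nu T = fst (snd (snd T))"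
definition fst_q0 :: "fst \<Rightarrow> nat" where "fst_q0 T = snd (snd (snd T))"

definition delta_hat :: "fst \<Rightarrow> bool list \<Rightarrow> nat" where
  "delta_hat T x = foldl (fst_delta T) (fst_q0 T) x"

lemma delta_hat_Nil: "delta_hat T [] = fst_q0 T"
  and delta_hat_snoc: "delta_hat T (x @ [a]) = fst_delta T (delta_hat T x) a"
  by (simp_all add: delta_hat_def)

primrec fst_out_rev :: "fst \<Rightarrow> bool list \<Rightarrow> bool list" where
  "fst_out_rev T [] = []"
| "fst_out_rev T (a # r) = fst_out_rev T r @ fst_nu T (delta_hat T (rev r)) a"

definition fst_out :: "fst \<Rightarrow> bool list \<Rightarrow> bool list" where
  "fst_out T x = fst_out_rev T (rev x)"

lemma fst_out_Nil: "fst_out T [] = []"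
  and fst_out_snoc: "fst_out T (x @ [a]) = fst_out T x @ fst_nu T (delta_hat T x) a"
  by (simp_all add: fst_out_def)

definition is_FST :: "fst \<Rightarrow> bool" where
  "is_FST T \<longleftrightarrow> 0 < fst_states T \<and> fst_q0 T < fst_states T \<and>
     (\<forall>q < fst_states T. \<forall>a. fst_delta T q a < fst_states T) \<and>
     (\<forall>q < fst_states T. \<exists>x. delta_hat T x = q)"

text \<open>A fixed standard binary representation sigma_T (self-delimiting codes).\<close>
definition enc_nat :: "nat \<Rightarrow> bool list" where
  "enc_nat m = replicate m True @ [False]"

definition enc_bits :: "bool list \<Rightarrow> bool list" where
  "enc_bits xs = concat (map (\<lambda>b. [True, b]) xs) @ [False]"

definition fst_code :: "fst \<Rightarrow> bool list" where
  "fst_code T = enc_nat (fst_states T) @ enc_nat (fst_q0 T) @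
     concat (map (\<lambda>(q, a). enc_nat (fst_delta T q a) @ enc_bits (fst_nu T q a))
                 (List.product [0..<fst_states T] [False, True]))"

definition fst_size :: "fst \<Rightarrow> nat" where
  "fst_size T = length (fst_code T)"

text \<open>FS^k(x) = min { |p| : T in FST^{<=k}, T(p) = x } (infinity if no such p).\<close>
definition FS :: "nat \<Rightarrow> bool list \<Rightarrow> enat" where
  "FS k x = (INF p \<in> {p. \<exists>T. is_FST T \<and> fst_size T \<le> k \<and> fst_out T p = x}. enat (length p))"

definition prefix_seq :: "(nat \<Rightarrow> bool) \<Rightarrow> nat \<Rightarrow> bool list" where
  "prefix_seq S n = map S [0..<n]"

definition fs_deep :: "(nat \<Rightarrow> bool) \<Rightarrow> bool" where
  "fs_deep S \<longleftrightarrow> (\<exists>\<alpha>::real > 0. \<forall>k. \<exists>k'. \<exists>\<^sub>\<infinity>n.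
      ereal_of_enat (FS k (prefix_seq S n)) - ereal_of_enat (FS k' (prefix_seq S n)) \<ge> ereal (\<alpha> * real n))"

end

theory Submission imports Defs "HOL-Library.Nat_Bijection" "HOL-Library.Infinite_Set" begin

fun frun :: "(nat \<Rightarrow> bool \<Rightarrow> nat) \<Rightarrow> (nat \<Rightarrow> bool \<Rightarrow> bool list) \<Rightarrow> nat \<Rightarrow> bool list \<Rightarrow> bool list" where
  "frun d v q [] = []"
| "frun d v q (a # p) = v q a @ frun d v (d q a) p"

lemma frun_append: "frun d v q (p1 @ p2) = frun d v q p1 @ frun d v (foldl d q p1) p2"
  by (induct p1 arbitrary: q) auto

lemma fst_out_append_run:
  "fst_out T (x @ p) = fst_out T x @ frun (fst_delta T) (fst_nu T) (delta_hat T x) p"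
proof (induct p arbitrary: x)
  case Nil then show ?case by simp
next
  case (Cons a p)
  have "fst_out T (x @ a # p) = fst_out T ((x @ [a]) @ p)" by simp
  also have "\<dots> = fst_out T (x @ [a]) @ frun (fst_delta T) (fst_nu T) (delta_hat T (x @ [a])) p"
    by (rule Cons)
  finally show ?case by (simp add: fst_out_snoc delta_hat_snoc)
qed

lemma fst_out_run: "fst_out T p = frun (fst_delta T) (fst_nu T) (fst_q0 T) p"
  using fst_out_append_run[of T "[]" p] by (simp add: fst_out_Nil delta_hat_Nil)

lemma frun_cong:
  assumes "q < n" "\<forall>q<n. \<forall>a. d q a < n" "\<forall>q<n. \<forall>a. d' q a = d q a" "\<forall>q<n. \<forall>a. v' q a = v q a"
  shows "frun d v q p = frun d' v' q p"
  using assms(1) by (induct p arbitrary: q) (auto simp: assms(2-4))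

lemma foldl_lt: "q < K \<Longrightarrow> \<forall>q a. d q a < K \<Longrightarrow> foldl d q p < K"
  by (induct p arbitrary: q) auto

lemma frun_split:
  assumes "\<forall>q a. length (v q a) \<le> K" "0 < K" "N \<le> length (frun d v q p)"
  shows "\<exists>p1 p2. p = p1 @ p2 \<and> N \<le> length (frun d v q p1) \<and> length (frun d v q p1) < N + K"
  using assms(3)
proof (induct p arbitrary: q N)
  case Nil then show ?case using assms(2) by (intro exI[of _ "[]"] exI[of _ "[]"]) auto
next
  case (Cons a p)
  show ?case
  proof (cases "N = 0")
    case True then show ?thesis using assms(2) by (intro exI[of _ "[]"] exI[of _ "a # p"]) simp
  next
    case False
    show ?thesis
    proof (cases "N \<le> length (v q a)")
      case True then show ?thesis using False assms(1)[rule_format, of q a]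
        by (intro exI[of _ "[a]"] exI[of _ p]) auto
    next
      case c2: False
      from Cons.prems c2 have "N - length (v q a) \<le> length (frun d v (d q a) p)" by simp
      from Cons.hyps[OF this] obtain p1 p2 where "p = p1 @ p2"
        "N - length (v q a) \<le> length (frun d v (d q a) p1)"
        "length (frun d v (d q a) p1) < N - length (v q a) + K" by blast
      then show ?thesis using c2 by (intro exI[of _ "a # p1"] exI[of _ p2]) auto
    qed
  qed
qed

definition MK :: "nat \<Rightarrow> ((nat \<Rightarrow> bool \<Rightarrow> nat) \<times> (nat \<Rightarrow> bool \<Rightarrow> bool list)) set" where
  "MK K = {(d,v). (\<forall>q a. d q a < K) \<and> (\<forall>q a. K \<le> q \<longrightarrow> d q a = 0) \<and>
      (\<forall>q a. length (v q a) \<le> K) \<and> (\<forall>q a. K \<le> q \<longrightarrow> v q a = [])}"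

definition fgood :: "nat \<Rightarrow> nat \<Rightarrow> bool list \<Rightarrow> bool" where
  "fgood K m x \<longleftrightarrow> (\<forall>(d,v)\<in>MK K. \<forall>q<K. \<forall>p j j'. j < K \<longrightarrow> j' < K \<longrightarrow>
      frun d v q p = drop j x @ take j' x \<longrightarrow> m \<le> length p)"

lemma chain:
  assumes dv: "(d,v) \<in> MK K" and g: "fgood K m x" and L: "K < length x"
  shows "q < K \<Longrightarrow> j < K \<Longrightarrow> frun d v q p = drop j (concat (replicate r x)) \<Longrightarrow> (r - 1) * m \<le> length p"
proof (induct r arbitrary: q p j)
  case 0 then show ?case by simp
next
  case (Suc r)
  show ?case
  proof (cases "r = 0")
    case True then show ?thesis by simp
  next
    case False
    define X where "X = concat (replicate r x)"
    have X: "X = x @ concat (replicate (r - 1) x)" using False unfolding X_def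
      by (cases r) auto
    have dvp: "\<forall>q a. d q a < K" "\<forall>q a. length (v q a) \<le> K" using dv by (auto simp: MK_def)
    have out: "frun d v q p = drop j x @ X" using Suc.prems L by (simp add: X_def)
    have K0: "0 < K" using Suc.prems by simp
    have "length x - j \<le> length (frun d v q p)" using out by simp
    from frun_split[OF dvp(2) K0 this] obtain p1 p2 where pp: "p = p1 @ p2"
      "length x - j \<le> length (frun d v q p1)" "length (frun d v q p1) < length x - j + K" by blast
    define l1 where "l1 = length (frun d v q p1)"
    define j' where "j' = l1 - (length x - j)"
    have j': "j' < K" using pp unfolding j'_def l1_def by simp
    have sp: "frun d v q p1 @ frun d v (foldl d q p1) p2 = drop j x @ X"
      using out pp frun_append by metis
    hence o1: "frun d v q p1 = take l1 (drop j x @ X)" and o2: "frun d v (foldl d q p1) p2 = drop l1 (drop j x @ X)"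
      unfolding l1_def by (metis append_eq_conv_conj)+
    have "take l1 (drop j x @ X) = drop j x @ take j' X" using pp Suc.prems L
      unfolding j'_def l1_def by simp
    also have "take j' X = take j' x" using j' L X by simp
    finally have o1': "frun d v q p1 = drop j x @ take j' x" using o1 by simp
    have m1: "m \<le> length p1" using g dv Suc.prems j' o1' unfolding fgood_def by blast
    have "drop l1 (drop j x @ X) = drop j' X" using pp Suc.prems L
      unfolding j'_def l1_def by simp
    hence o2': "frun d v (foldl d q p1) p2 = drop j' (concat (replicate r x))" using o2 X_def by simp
    have "foldl d q p1 < K" using foldl_lt Suc.prems dvp by blast
    from Suc.hyps[OF this j' o2'] have "(r - 1) * m \<le> length p2" .
    then show ?thesis using m1 pp False by (cases r) auto
  qed
qed

lemma len_enc_bits: "length (enc_bits xs) = 2 * length xs + 1"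
  by (induct xs) (auto simp: enc_bits_def)

lemma len_concat_mem: "y \<in> set xs \<Longrightarrow> length y \<le> length (concat xs)"
  by (induct xs) auto

lemma size_states: "fst_size T \<le> k \<Longrightarrow> fst_states T \<le> k"
  by (auto simp: fst_size_def fst_code_def enc_nat_def)

lemma size_nu: assumes "fst_size T \<le> k" "q < fst_states T" shows "length (fst_nu T q a) \<le> k"
proof -
  let ?F = "(\<lambda>(q, a). enc_nat (fst_delta T q a) @ enc_bits (fst_nu T q a))"
  have "(q,a) \<in> set (List.product [0..<fst_states T] [False, True])" using assms(2) by (cases a) auto
  hence "?F (q,a) \<in> set (map ?F (List.product [0..<fst_states T] [False, True]))" by auto
  hence "length (?F (q,a)) \<le> length (concat (map ?F (List.product [0..<fst_states T] [False, True])))"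
    by (rule len_concat_mem)
  hence "length (enc_bits (fst_nu T q a)) \<le> length (fst_code T)" by (simp add: fst_code_def)
  thus ?thesis using assms(1) by (simp add: len_enc_bits fst_size_def)
qed

lemma lower:
  assumes T: "is_FST T" and sz: "fst_size T \<le> k" and g: "fgood (Suc k) m x" and L: "Suc k < length x"
    and out: "fst_out T p = w @ concat (replicate r x)"
  shows "(r - 1) * m \<le> length p"
proof -
  define n where "n = fst_states T"
  define d' where "d' = (\<lambda>q a. if q < n then fst_delta T q a else 0)"
  define v' where "v' = (\<lambda>q a. if q < n then fst_nu T q a else [])"
  have nk: "n \<le> k" using size_states[OF sz] n_def by simp
  have Tp: "0 < n" "fst_q0 T < n" "\<forall>q<n. \<forall>a. fst_delta T q a < n" using T unfolding is_FST_def n_def by auto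
  have dv: "(d', v') \<in> MK (Suc k)" unfolding MK_def d'_def v'_def using Tp nk size_nu[OF sz] n_def
    by (auto simp: less_Suc_eq_le) (meson less_imp_le_nat order.strict_trans2 le_SucI)+
  have "fst_out T p = frun d' v' (fst_q0 T) p" unfolding fst_out_run
    by (rule frun_cong[OF Tp(2) Tp(3)]) (auto simp: d'_def v'_def)
  hence o: "frun d' v' (fst_q0 T) p = w @ concat (replicate r x)" using out by simp
  have dvp: "\<forall>q a. d' q a < Suc k" "\<forall>q a. length (v' q a) \<le> Suc k" using dv by (auto simp: MK_def)
  have "length w \<le> length (frun d' v' (fst_q0 T) p)" using o by simp
  from frun_split[OF dvp(2) _ this] obtain p1 p2 where pp: "p = p1 @ p2"
    "length w \<le> length (frun d' v' (fst_q0 T) p1)" "length (frun d' v' (fst_q0 T) p1) < length w + Suc k"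
    by blast
  define l1 where "l1 = length (frun d' v' (fst_q0 T) p1)"
  have sp: "frun d' v' (fst_q0 T) p1 @ frun d' v' (foldl d' (fst_q0 T) p1) p2 = w @ concat (replicate r x)"
    using o pp frun_append by metis
  hence o2: "frun d' v' (foldl d' (fst_q0 T) p1) p2 = drop l1 (w @ concat (replicate r x))"
    unfolding l1_def by (metis append_eq_conv_conj)
  hence o2': "frun d' v' (foldl d' (fst_q0 T) p1) p2 = drop (l1 - length w) (concat (replicate r x))"
    using pp(2) unfolding l1_def by simp
  have q: "foldl d' (fst_q0 T) p1 < Suc k" using foldl_lt[of "fst_q0 T" "Suc k" d' p1] Tp nk dvp by simp
  have j: "l1 - length w < Suc k" using pp unfolding l1_def by simp
  from chain[OF dv g L q j o2'] have "(r - 1) * m \<le> length p2" .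
  thus ?thesis using pp by simp
qed

lemma finite_funs:
  assumes "finite A"
  shows "finite {f :: nat \<Rightarrow> bool \<Rightarrow> 'b. (\<forall>q a. f q a \<in> A) \<and> (\<forall>q a. K \<le> q \<longrightarrow> f q a = c)}"
    (is "finite ?F")
proof -
  define P where "P = List.product [0..<K] [False, True]"
  define g where "g = (\<lambda>f::nat \<Rightarrow> bool \<Rightarrow> 'b. map (\<lambda>(q,a). f q a) P)"
  have "inj_on g ?F"
  proof (rule inj_onI)
    fix f1 f2 assume f1: "f1 \<in> ?F" and f2: "f2 \<in> ?F" and e: "g f1 = g f2"
    show "f1 = f2"
    proof (intro ext)
      fix q a
      show "f1 q a = f2 q a"
      proof (cases "q < K")
        case True
        hence "(q,a) \<in> set P" unfolding P_def by (cases a) auto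
        thus ?thesis using e unfolding g_def map_eq_conv by fastforce
      next
        case False thus ?thesis using f1 f2 by auto
      qed
    qed
  qed
  moreover have "g ` ?F \<subseteq> {xs. set xs \<subseteq> A \<and> length xs = length P}" unfolding g_def by auto
  hence "finite (g ` ?F)" using finite_lists_length_eq[OF assms] finite_subset by blast
  ultimately show ?thesis using finite_imageD by blast
qed

lemma finite_MK: "finite (MK K)"
proof -
  have "MK K \<subseteq> {f :: nat \<Rightarrow> bool \<Rightarrow> nat. (\<forall>q a. f q a \<in> {..<K}) \<and> (\<forall>q a. K \<le> q \<longrightarrow> f q a = 0)}
     \<times> {f :: nat \<Rightarrow> bool \<Rightarrow> bool list. (\<forall>q a. f q a \<in> {xs. set xs \<subseteq> UNIV \<and> length xs \<le> K}) \<and> (\<forall>q a. K \<le> q \<longrightarrow> f q a = [])}"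
    unfolding MK_def by auto
  moreover have "finite {xs :: bool list. set xs \<subseteq> UNIV \<and> length xs \<le> K}"
    by (rule finite_lists_length_le) simp
  ultimately show ?thesis using finite_funs[of "{..<K}"] finite_funs[of "{xs :: bool list. set xs \<subseteq> UNIV \<and> length xs \<le> K}"]
    by (meson finite_SigmaI finite_lessThan finite_subset)
qed

lemma sum_pow2: "(\<Sum>i\<le>m. (2::nat)^i) < 2^Suc m"
  by (induct m) auto

lemma exists_good: "\<exists>m x. 4 \<le> m \<and> K < 2*m \<and> length x = 2*m \<and> fgood K m x"
proof -
  define C where "C = 2^K * K * K * card (MK K) * 2"
  define m where "m = C + K + 4"
  define PS where "PS = {p :: bool list. set p \<subseteq> UNIV \<and> length p \<le> m}"
  define Out where "Out = (\<lambda>((d,v),q,p). frun d v q p) ` (MK K \<times> {..<K} \<times> PS)"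
  define D where "D = (\<lambda>(z,j). drop (K-j) (take (2*m - j) z)) ` (Out \<times> {..<K})"
  define T0 where "T0 = {t::bool list. set t \<subseteq> UNIV \<and> length t = K}"
  define Bad where "Bad = {x. length x = 2*m \<and> \<not> fgood K m x}"
  have fPS: "finite PS" unfolding PS_def by (rule finite_lists_length_le) simp
  have cPS: "card PS < 2^Suc m" unfolding PS_def using card_lists_length_le[of "UNIV::bool set" m] sum_pow2[of m]
    by simp
  have fOut: "finite Out" unfolding Out_def using fPS finite_MK by auto
  have cOut: "card Out \<le> card (MK K) * K * 2^Suc m"
  proof -
    have "card Out \<le> card (MK K \<times> {..<K} \<times> PS)" unfolding Out_def by (rule card_image_le) (use fPS finite_MK in auto)
    also have "\<dots> = card (MK K) * (K * card PS)" by (simp add: card_cartesian_product)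
    also have "\<dots> \<le> card (MK K) * (K * 2^Suc m)" using cPS by (intro mult_le_mono2) simp
    finally show ?thesis by simp
  qed
  have fD: "finite D" unfolding D_def using fOut by auto
  have cD: "card D \<le> card Out * K"
  proof -
    have "card D \<le> card (Out \<times> {..<K})" unfolding D_def by (rule card_image_le) (use fOut in auto)
    thus ?thesis by (simp add: card_cartesian_product)
  qed
  have fT0: "finite T0" and cT0: "card T0 = 2^K" unfolding T0_def
    using finite_lists_length_eq[of "UNIV::bool set" K] card_lists_length_eq[of "UNIV::bool set" K] by auto
  have sub: "Bad \<subseteq> (\<lambda>(t,u). t @ u) ` (T0 \<times> D)"
  proof
    fix x assume "x \<in> Bad"
    hence lx: "length x = 2*m" and ng: "\<not> fgood K m x" unfolding Bad_def by auto
    from ng obtain d v q p j j' where dv: "(d,v) \<in> MK K" and q: "q < K" and j: "j < K" "j' < K"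
      and e: "frun d v q p = drop j x @ take j' x" and lp: "length p < m"
      unfolding fgood_def by force
    have z: "frun d v q p \<in> Out" unfolding Out_def PS_def using dv q lp by force
    have "take (2*m - j) (frun d v q p) = drop j x" using e lx by simp
    hence "drop (K - j) (take (2*m - j) (frun d v q p)) = drop K x" using j by simp
    hence "drop K x \<in> D" unfolding D_def using z j by force
    moreover have "take K x \<in> T0" unfolding T0_def using lx m_def by simp
    ultimately show "x \<in> (\<lambda>(t,u). t @ u) ` (T0 \<times> D)"
      by (intro image_eqI[of _ _ "(take K x, drop K x)"]) auto
  qed
  have "card Bad \<le> card ((\<lambda>(t,u). t @ u) ` (T0 \<times> D))" by (rule card_mono[OF _ sub]) (use fT0 fD in auto)
  also have "\<dots> \<le> card (T0 \<times> D)" by (rule card_image_le) (use fT0 fD in auto)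
  also have "\<dots> = 2^K * card D" by (simp add: card_cartesian_product cT0)
  also have "\<dots> \<le> 2^K * (card (MK K) * K * 2^Suc m * K)" using cD cOut
    by (meson le_trans mult_le_mono1 mult_le_mono2)
  also have "\<dots> = C * 2^m" unfolding C_def by simp
  also have "\<dots> < 2^m * 2^m"
  proof -
    have "C < 2^C" by (rule less_exp)
    also have "\<dots> \<le> 2^m" unfolding m_def by (rule power_increasing) auto
    finally show ?thesis by simp
  qed
  also have "\<dots> = card {x :: bool list. set x \<subseteq> UNIV \<and> length x = 2*m}"
    using card_lists_length_eq[of "UNIV::bool set" "2*m"] by (simp add: power_add mult_2 [symmetric] power_mult_distrib) (simp add: mult_2 power_add)
  finally have cb: "card Bad < card {x :: bool list. set x \<subseteq> UNIV \<and> length x = 2*m}" .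
  have "\<not> {x :: bool list. set x \<subseteq> UNIV \<and> length x = 2*m} \<subseteq> Bad"
  proof
    assume "{x :: bool list. set x \<subseteq> UNIV \<and> length x = 2*m} \<subseteq> Bad"
    moreover have "finite Bad" using sub fT0 fD finite_subset by blast
    ultimately have "card {x :: bool list. set x \<subseteq> UNIV \<and> length x = 2*m} \<le> card Bad"
      by (rule card_mono[rotated])
    thus False using cb by simp
  qed
  then obtain x where "length x = 2*m" "x \<notin> Bad" by auto
  thus ?thesis unfolding Bad_def m_def by (intro exI[of _ m] exI[of _ x]) (auto simp: m_def)
qed

definition Mx :: "bool list \<Rightarrow> fst" where
  "Mx x = (2, \<lambda>q a. if q = 0 \<and> a then 1 else 0, \<lambda>q a. if q = 0 then (if a then [] else x) else [a], 0)"

lemma Mx_simps: "fst_states (Mx x) = 2" "fst_q0 (Mx x) = 0"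
  "fst_delta (Mx x) q a = (if q = 0 \<and> a then 1 else 0)"
  "fst_nu (Mx x) q a = (if q = 0 then (if a then [] else x) else [a])"
  by (simp_all add: Mx_def fst_states_def fst_q0_def fst_delta_def fst_nu_def)

lemma Mx_FST: "is_FST (Mx x)"
proof -
  have "delta_hat (Mx x) [True] = 1" by (simp add: delta_hat_def Mx_simps)
  moreover have "delta_hat (Mx x) [] = 0" by (simp add: delta_hat_def Mx_simps)
  ultimately have r: "\<forall>q<2. \<exists>y. delta_hat (Mx x) y = q"
    by (metis One_nat_def less_2_cases)
  have "\<forall>q<2. \<forall>a. fst_delta (Mx x) q a < 2" by (simp add: Mx_simps)
  thus ?thesis unfolding is_FST_def Mx_simps(1,2) using r by simp
qed

lemma Mx_lit:
  "frun (fst_delta (Mx x)) (fst_nu (Mx x)) 0 (concat (map (\<lambda>b. [True, b]) w)) = w \<and>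
   foldl (fst_delta (Mx x)) 0 (concat (map (\<lambda>b. [True, b]) w)) = 0"
  by (induct w) (auto simp: Mx_simps)

lemma Mx_rep:
  "frun (fst_delta (Mx x)) (fst_nu (Mx x)) 0 (replicate r False) = concat (replicate r x)"
  by (induct r) (auto simp: Mx_simps)

lemma Mx_out:
  "fst_out (Mx x) (concat (map (\<lambda>b. [True, b]) w) @ replicate r False) = w @ concat (replicate r x)"
  unfolding fst_out_run frun_append Mx_simps(2) using Mx_lit[of x w] Mx_rep[of x r]
  by simp

lemma len_lit: "length (concat (map (\<lambda>b. [True, b]) w)) = 2 * length w"
  by (induct w) auto

definition xm :: "nat \<Rightarrow> nat \<times> bool list" where
  "xm k = (SOME mx. 4 \<le> fst mx \<and> Suc k < 2 * fst mx \<and> length (snd mx) = 2 * fst mx \<and> fgood (Suc k) (fst mx) (snd mx))"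

lemma xm: "4 \<le> fst (xm k) \<and> Suc k < 2 * fst (xm k) \<and> length (snd (xm k)) = 2 * fst (xm k) \<and> fgood (Suc k) (fst (xm k)) (snd (xm k))"
proof -
  from exists_good[of "Suc k"] obtain m x where "4 \<le> m \<and> Suc k < 2*m \<and> length x = 2*m \<and> fgood (Suc k) m x" by blast
  hence "\<exists>mx. 4 \<le> fst mx \<and> Suc k < 2 * fst mx \<and> length (snd mx) = 2 * fst mx \<and> fgood (Suc k) (fst mx) (snd mx)"
    by (intro exI[of _ "(m,x)"]) simp
  thus ?thesis unfolding xm_def by (rule someI_ex)
qed

primrec W :: "nat \<Rightarrow> bool list" where
  "W 0 = []"
| "W (Suc j) = W j @ concat (replicate (8 * (length (W j) + 1)) (snd (xm (fst (prod_decode j)))))"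

definition Sq :: "nat \<Rightarrow> bool" where "Sq i = W (Suc i) ! i"

lemma W_mono: "j \<le> j' \<Longrightarrow> \<exists>u. W j' = W j @ u"
proof (induct j' rule: dec_induct)
  case base then show ?case by simp
next
  case (step n) then show ?case by auto
qed

lemma W_len: "j \<le> length (W j)"
proof (induct j)
  case 0 then show ?case by simp
next
  case (Suc j)
  have "length (snd (xm (fst (prod_decode j)))) \<ge> 8" using xm[of "fst (prod_decode j)"] by simp
  hence "length (concat (replicate (8 * (length (W j) + 1)) (snd (xm (fst (prod_decode j)))))) \<ge> 1"
    by (simp add: length_concat sum_list_replicate)
  then show ?case using Suc by simp
qed

lemma prefix_W: "prefix_seq Sq (length (W j)) = W j"
proof (rule nth_equalityI)
  show "length (prefix_seq Sq (length (W j))) = length (W j)" by (simp add: prefix_seq_def)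
next
  fix i assume "i < length (prefix_seq Sq (length (W j)))"
  hence i: "i < length (W j)" by (simp add: prefix_seq_def)
  have i2: "i < length (W (Suc i))" using W_len[of "Suc i"] by simp
  obtain u1 where u1: "W (max j (Suc i)) = W j @ u1" using W_mono[of j "max j (Suc i)"] by auto
  obtain u2 where u2: "W (max j (Suc i)) = W (Suc i) @ u2" using W_mono[of "Suc i" "max j (Suc i)"] by auto
  have "W (Suc i) ! i = W j ! i" using u1 u2 i i2 by (metis nth_append_left)
  thus "prefix_seq Sq (length (W j)) ! i = W j ! i" using i by (simp add: prefix_seq_def Sq_def)
qed

lemma arith_ineq:
  fixes P m :: nat
  assumes "4 \<le> m"
  shows "real ((8 * (P + 1) - 1) * m) - real (2 * P + 8 * (P + 1)) \<ge> 1/8 * real (P + 8 * (P + 1) * (2 * m))"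
proof -
  have e: "real ((8 * (P + 1) - 1) * m) = (8 * real P + 7) * real m" by (simp add: of_nat_diff)
  have "(6 * real P + 5) * real m \<ge> (6 * real P + 5) * 4" using assms by (intro mult_left_mono) auto
  thus ?thesis unfolding e by (simp add: algebra_simps)
qed

theorem theorem3:
  shows "\<exists>S :: nat \<Rightarrow> bool. fs_deep S"
proof (intro exI[of _ Sq])
  show "fs_deep Sq" unfolding fs_deep_def
  proof (intro exI[of _ "1/8"] conjI allI)
    fix k
    define m where "m = fst (xm k)"
    define x where "x = snd (xm k)"
    have xk: "4 \<le> m" "Suc k < length x" "length x = 2 * m" "fgood (Suc k) m x"
      using xm[of k] unfolding m_def x_def by auto
    show "\<exists>k'. \<exists>\<^sub>\<infinity>n. ereal_of_enat (FS k (prefix_seq Sq n)) - ereal_of_enat (FS k' (prefix_seq Sq n)) \<ge> ereal (1/8 * real n)"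
    proof (intro exI[of _ "fst_size (Mx x)"], unfold INFM_nat, intro allI)
      fix N
      define j where "j = prod_encode (k, N)"
      define P where "P = length (W j)"
      define r where "r = 8 * (P + 1)"
      define n where "n = length (W (Suc j))"
      have Wj: "W (Suc j) = W j @ concat (replicate r x)"
        unfolding j_def r_def P_def x_def by simp
      have nval: "n = P + r * (2 * m)" unfolding n_def Wj P_def using xk(3) by (simp add: length_concat sum_list_replicate)
      have "N \<le> j" unfolding j_def by (rule le_prod_encode_2)
      moreover have "Suc j \<le> n" unfolding n_def by (rule W_len)
      ultimately have nN: "n > N" by simp
      have pre: "prefix_seq Sq n = W j @ concat (replicate r x)" unfolding n_def prefix_W by (rule Wj)
      have lowb: "enat ((r - 1) * m) \<le> FS k (prefix_seq Sq n)"
        unfolding FS_def pre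
      proof (rule INF_greatest)
        fix p assume "p \<in> {p. \<exists>T. is_FST T \<and> fst_size T \<le> k \<and> fst_out T p = W j @ concat (replicate r x)}"
        then obtain T where "is_FST T" "fst_size T \<le> k" "fst_out T p = W j @ concat (replicate r x)" by blast
        from lower[OF this(1,2) xk(4) xk(2) this(3)] show "enat ((r - 1) * m) \<le> enat (length p)" by simp
      qed
      have upb: "FS (fst_size (Mx x)) (prefix_seq Sq n) \<le> enat (2 * P + r)"
        unfolding FS_def pre
      proof -
        let ?p = "concat (map (\<lambda>b. [True, b]) (W j)) @ replicate r False"
        have "?p \<in> {p. \<exists>T. is_FST T \<and> fst_size T \<le> fst_size (Mx x) \<and> fst_out T p = W j @ concat (replicate r x)}"
          using Mx_FST Mx_out by blast
        hence "(INF p\<in>{p. \<exists>T. is_FST T \<and> fst_size T \<le> fst_size (Mx x) \<and> fst_out T p = W j @ concat (replicate r x)}. enat (length p)) \<le> enat (length ?p)"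
          by (rule INF_lower)
        thus "(INF p\<in>{p. \<exists>T. is_FST T \<and> fst_size T \<le> fst_size (Mx x) \<and> fst_out T p = W j @ concat (replicate r x)}. enat (length p)) \<le> enat (2 * P + r)"
          by (simp add: len_lit P_def)
      qed
      have a1: "ereal (real ((r - 1) * m)) \<le> ereal_of_enat (FS k (prefix_seq Sq n))"
        using lowb by (metis ereal_of_enat_le_iff ereal_of_enat_simps(1))
      have a2: "ereal_of_enat (FS (fst_size (Mx x)) (prefix_seq Sq n)) \<le> ereal (real (2 * P + r))"
        using upb by (metis ereal_of_enat_le_iff ereal_of_enat_simps(1))
      have "ereal (1/8 * real n) \<le> ereal (real ((r - 1) * m)) - ereal (real (2 * P + r))"
        using arith_ineq[OF xk(1), of P] unfolding nval r_def by simp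
      also have "\<dots> \<le> ereal_of_enat (FS k (prefix_seq Sq n)) - ereal_of_enat (FS (fst_size (Mx x)) (prefix_seq Sq n))"
        by (rule ereal_minus_mono[OF a1 a2])
      finally show "\<exists>n>N. ereal (1/8 * real n) \<le> ereal_of_enat (FS k (prefix_seq Sq n)) - ereal_of_enat (FS (fst_size (Mx x)) (prefix_seq Sq n))"
        using nN by blast
    qed
  qed simp
qed

end
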